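(* Suppose $\frac{\partial F_2}{\partial S}(S,I_2)\le I_2$ for all $S,I_2\ge0$. Then the model admits a unique single-strain ($I_2$)-infection equilibrium $E_2=(\tilde S,\tilde V_1,0,\tilde I_2)$ with $\tilde S,\tilde V_1,\tilde I_2>0$ if and only if $\mathcal{R}_2>1$.
   Context: The model is $\dot S=\Lambda-F_1(S,I_1)-F_2(S,I_2)-\lambda S$, $\dot V_1=rS-(\mu+kI_2)V_1$, $\dot I_1=F_1(S,I_1)-\alpha_1I_1$, $\dot I_2=F_2(S,I_2)+kI_2V_1-\alpha_2I_2$ on $\mathbb{R}^4_+$. The constants $\Lambda,\mu,r,k,\gamma_1,\gamma_2>0$ and $v_1,v_2\ge0$; $\lambda=r+\mu$ and $\alpha_i=\gamma_i+v_i+\mu$. For $i=1,2$ the incidence functions satisfy: - (H1) $F_i(S,I_i)=I_if_i(S,I_i)$ with $F_i,f_i\in C^2(\mathbb{R}^2_+,\mathbb{R}_+)$ and $F_i(0,I_i)=F_i(S,0)=0$; - (H2) $\partial f_i/\partial S>0$ and $\partial f_i/\partial I_i\le0$; - (H3) $\lim_{I_i\to0^+}F_i(S,I_i)/I_i$ exists and is positive for $S>0$. Let $S^0=\Lambda/\lambda$ and $\sigma_2=\frac{\partial F_2}{\partial I_2}(S^0,0)$. Set $\mathcal{R}_2=\sigma_2/\alpha_2+\frac{kr\Lambda}{\alpha_2\mu\lambda}$. *)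

theory Defs
  imports "HOL-Analysis.Analysis"
begin

definition quad :: "(real \<times> real) set" where
  "quad = {0..} \<times> {0..}"

definition C1_on :: "(real \<times> real) set \<Rightarrow> (real \<times> real \<Rightarrow> real) \<Rightarrow> bool" where
  "C1_on A g \<longleftrightarrow> (\<exists>g1 g2. (\<forall>x\<in>A. (g has_derivative (\<lambda>h. g1 x * fst h + g2 x * snd h)) (at x within A))
      \<and> continuous_on A g1 \<and> continuous_on A g2)"

definition C2_on :: "(real \<times> real) set \<Rightarrow> (real \<times> real \<Rightarrow> real) \<Rightarrow> bool" where
  "C2_on A g \<longleftrightarrow> (\<exists>g1 g2. (\<forall>x\<in>A. (g has_derivative (\<lambda>h. g1 x * fst h + g2 x * snd h)) (at x within A))
      \<and> C1_on A g1 \<and> C1_on A g2)"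

text \<open>Hypotheses (H1)--(H3) on an incidence function F = I f.  Partial derivatives
  are one-sided (within the nonnegative half-line) so they make sense on the boundary.\<close>
definition incidence :: "(real \<Rightarrow> real \<Rightarrow> real) \<Rightarrow> (real \<Rightarrow> real \<Rightarrow> real) \<Rightarrow> bool" where
  "incidence F f \<longleftrightarrow>
     \<comment> \<open>(H1)\<close>
     (\<forall>S\<ge>0. \<forall>I\<ge>0. F S I = I * f S I \<and> F S I \<ge> 0 \<and> f S I \<ge> 0)
   \<and> C2_on quad (\<lambda>(S,I). F S I) \<and> C2_on quad (\<lambda>(S,I). f S I)
   \<and> (\<forall>I\<ge>0. F 0 I = 0) \<and> (\<forall>S\<ge>0. F S 0 = 0)
     \<comment> \<open>(H2)\<close>
   \<and> (\<forall>S\<ge>0. \<forall>I\<ge>0. \<forall>d. ((\<lambda>t. f t I) has_real_derivative d) (at S within {0..}) \<longrightarrow> d > 0)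
   \<and> (\<forall>S\<ge>0. \<forall>I\<ge>0. \<forall>d. ((\<lambda>t. f S t) has_real_derivative d) (at I within {0..}) \<longrightarrow> d \<le> 0)
     \<comment> \<open>(H3)\<close>
   \<and> (\<forall>S>0. \<exists>L>0. ((\<lambda>I. F S I / I) \<longlongrightarrow> L) (at_right 0))"

definition equilibrium ::
  "real \<Rightarrow> real \<Rightarrow> real \<Rightarrow> real \<Rightarrow> real \<Rightarrow> real \<Rightarrow> real \<Rightarrow> real \<Rightarrow>
   (real \<Rightarrow> real \<Rightarrow> real) \<Rightarrow> (real \<Rightarrow> real \<Rightarrow> real) \<Rightarrow>
   real \<Rightarrow> real \<Rightarrow> real \<Rightarrow> real \<Rightarrow> bool" where
  "equilibrium \<Lambda> \<mu> r k \<gamma>1 \<gamma>2 v1 v2 F1 F2 S V1 I1 I2 \<longleftrightarrow>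
     S \<ge> 0 \<and> V1 \<ge> 0 \<and> I1 \<ge> 0 \<and> I2 \<ge> 0
   \<and> \<Lambda> - F1 S I1 - F2 S I2 - (r + \<mu>) * S = 0
   \<and> r * S - (\<mu> + k * I2) * V1 = 0
   \<and> F1 S I1 - (\<gamma>1 + v1 + \<mu>) * I1 = 0
   \<and> F2 S I2 + k * I2 * V1 - (\<gamma>2 + v2 + \<mu>) * I2 = 0"

end

theory Submission
  imports Defs
begin

lemma mvt_within:
  fixes \<phi> \<phi>' :: "real \<Rightarrow> real"
  assumes d: "\<forall>x\<ge>a. (\<phi> has_real_derivative \<phi>' x) (at x within {a..})"
    and xy: "a \<le> x" "x < y"
  shows "\<exists>z. z > a \<and> \<phi> y - \<phi> x = (y - x) * \<phi>' z"
proof -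
  have cont: "continuous_on {x..y} \<phi>"
    unfolding continuous_on_eq_continuous_within
    proof
      fix z assume z: "z \<in> {x..y}"
      then have "continuous (at z within {a..}) \<phi>"
        using d[rule_format, of z] xy z by (auto intro: DERIV_continuous)
      then show "continuous (at z within {x..y}) \<phi>"
        by (rule continuous_within_subset) (use xy in auto)
    qed
  have at: "\<And>z. z > a \<Longrightarrow> (\<phi> has_real_derivative \<phi>' z) (at z)"
  proof -
    fix z :: real assume "z > a"
    then have "at z within {a..} = at z"
      by (intro at_within_interior) simp
    moreover have "(\<phi> has_real_derivative \<phi>' z) (at z within {a..})" using d \<open>z > a\<close> by simp
    ultimately show "(\<phi> has_real_derivative \<phi>' z) (at z)" by simp
  qed
  obtain l z where lz: "x < z" "z < y" "DERIV \<phi> z :> l" "\<phi> y - \<phi> x = (y - x) * l"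
  proof -
    have "\<And>w. x < w \<Longrightarrow> w < y \<Longrightarrow> \<phi> differentiable (at w)"
      using at xy real_differentiable_def by (meson le_less_trans)
    then show ?thesis using MVT[OF xy(2) cont] that by blast
  qed
  have "l = \<phi>' z" using DERIV_unique[OF lz(3) at[of z]] lz xy by auto
  then show ?thesis using lz xy by (intro exI[of _ z]) auto
qed

lemma partials:
  assumes "C2_on quad (\<lambda>(S,I). f S I)"
  shows "\<exists>g1 g2. (\<forall>S\<ge>0. \<forall>I\<ge>0. ((\<lambda>t. f t I) has_real_derivative g1 S I) (at S within {0..})
      \<and> ((\<lambda>t. f S t) has_real_derivative g2 S I) (at I within {0..}))
      \<and> continuous_on quad (\<lambda>(S,I). f S I)"
proof -
  obtain h1 h2 where d: "\<forall>x\<in>quad. ((\<lambda>(S,I). f S I) has_derivative (\<lambda>h. h1 x * fst h + h2 x * snd h)) (at x within quad)"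
    using assms unfolding C2_on_def by blast
  have A: "((\<lambda>t. f t I) has_real_derivative h1 (S,I)) (at S within {0..})" if "S \<ge> 0" "I \<ge> 0" for S I
  proof -
    have p: "((\<lambda>t. (t, I)) has_derivative (\<lambda>h. (h, 0))) (at S within {0..})"
      by (rule has_derivative_Pair[OF has_derivative_ident has_derivative_const])
    have "((\<lambda>t. (\<lambda>(S,I). f S I) (t, I)) has_derivative (\<lambda>y. h1 (S,I) * fst (y,0::real) + h2 (S,I) * snd (y,0::real))) (at S within {0..})"
      by (rule has_derivative_in_compose2[of quad "\<lambda>(S,I). f S I" "\<lambda>x h. h1 x * fst h + h2 x * snd h", OF _ _ _ p]) (use d that in \<open>auto simp: quad_def\<close>)
    moreover have "(\<lambda>y. h1 (S,I) * fst (y,0::real) + h2 (S,I) * snd (y,0::real)) = (*) (h1 (S,I))"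
      "(\<lambda>y. h1 (S,I) * fst (0::real,y) + h2 (S,I) * snd (0::real,y)) = (*) (h2 (S,I))"
      by (auto simp: fun_eq_iff)
    ultimately show ?thesis unfolding has_field_derivative_def by simp
  qed
  have B: "((\<lambda>t. f S t) has_real_derivative h2 (S,I)) (at I within {0..})" if "S \<ge> 0" "I \<ge> 0" for S I
  proof -
    have p: "((\<lambda>t. (S, t)) has_derivative (\<lambda>h. (0, h))) (at I within {0..})"
      by (rule has_derivative_Pair[OF has_derivative_const has_derivative_ident])
    have "((\<lambda>t. (\<lambda>(S,I). f S I) (S, t)) has_derivative (\<lambda>y. h1 (S,I) * fst (0::real,y) + h2 (S,I) * snd (0::real,y))) (at I within {0..})"
      by (rule has_derivative_in_compose2[of quad "\<lambda>(S,I). f S I" "\<lambda>x h. h1 x * fst h + h2 x * snd h", OF _ _ _ p]) (use d that in \<open>auto simp: quad_def\<close>)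
    moreover have "(\<lambda>y. h1 (S,I) * fst (y,0::real) + h2 (S,I) * snd (y,0::real)) = (*) (h1 (S,I))"
      "(\<lambda>y. h1 (S,I) * fst (0::real,y) + h2 (S,I) * snd (0::real,y)) = (*) (h2 (S,I))"
      by (auto simp: fun_eq_iff)
    ultimately show ?thesis unfolding has_field_derivative_def by simp
  qed
  have C: "continuous_on quad (\<lambda>(S,I). f S I)"
    by (rule has_derivative_continuous_on) (use d in blast)
  show ?thesis
    by (rule exI[of _ "\<lambda>S I. h1 (S,I)"], rule exI[of _ "\<lambda>S I. h2 (S,I)"]) (use A B C in auto)
qed

lemma frac_lt:
  fixes a b c d :: real
  assumes "b > 0" "d > 0" "a * d < c * b"
  shows "a / b < c / d"
proof -
  have "a / b = (a * d) / (b * d)" using assms by simp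
  also have "\<dots> < (c * b) / (b * d)" using assms by (intro divide_strict_right_mono) auto
  also have "\<dots> = c / d" using assms by simp
  finally show ?thesis .
qed

theorem mainTheorem5:
  fixes \<Lambda> \<mu> r k \<gamma>1 \<gamma>2 v1 v2 \<sigma>2 :: real
    and F1 f1 F2 f2 :: "real \<Rightarrow> real \<Rightarrow> real"
  assumes "\<Lambda> > 0" "\<mu> > 0" "r > 0" "k > 0" "\<gamma>1 > 0" "\<gamma>2 > 0" "v1 \<ge> 0" "v2 \<ge> 0"
    and "incidence F1 f1" and "incidence F2 f2"
    and sigma2: "((\<lambda>I. F2 (\<Lambda> / (r + \<mu>)) I) has_real_derivative \<sigma>2) (at 0 within {0..})"
    and dS: "\<forall>S\<ge>0. \<forall>I\<ge>0. \<forall>d. ((\<lambda>t. F2 t I) has_real_derivative d) (at S within {0..}) \<longrightarrow> d \<le> I"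
  shows "(\<exists>!p. case p of (S, V1, I2) \<Rightarrow>
             S > 0 \<and> V1 > 0 \<and> I2 > 0 \<and> equilibrium \<Lambda> \<mu> r k \<gamma>1 \<gamma>2 v1 v2 F1 F2 S V1 0 I2)
         \<longleftrightarrow> \<sigma>2 / (\<gamma>2 + v2 + \<mu>) + k * r * \<Lambda> / ((\<gamma>2 + v2 + \<mu>) * \<mu> * (r + \<mu>)) > 1"
proof -
  note pos = assms(1-8)
  define \<alpha> where "\<alpha> = \<gamma>2 + v2 + \<mu>"
  define lam where "lam = r + \<mu>"
  define S0 where "S0 = \<Lambda> / lam"
  define sf where "sf = (\<lambda>I. (\<mu>+k*I)*(\<Lambda>-\<alpha>*I)/(\<mu>*(lam+k*I)))"
  define wf where "wf = (\<lambda>I. (lam*\<mu>*\<alpha> - k*r*\<Lambda> + lam*k*\<alpha>*I)/(\<mu>*(lam+k*I)))"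
  have \<alpha>pos: "\<alpha> > 0" and lampos: "lam > 0" and S0pos: "S0 > 0"
    using pos by (auto simp: \<alpha>_def lam_def S0_def)
  note inc1 = assms(9)[unfolded incidence_def]
  note inc2 = assms(10)[unfolded incidence_def]
  have H1: "\<forall>S\<ge>0. \<forall>I\<ge>0. F2 S I = I * f2 S I \<and> F2 S I \<ge> 0 \<and> f2 S I \<ge> 0"
    and C2f: "C2_on quad (\<lambda>(S,I). f2 S I)"
    and F20: "\<forall>I\<ge>0. F2 0 I = 0" and F2S0: "\<forall>S\<ge>0. F2 S 0 = 0"
    and H2a: "\<forall>S\<ge>0. \<forall>I\<ge>0. \<forall>d. ((\<lambda>t. f2 t I) has_real_derivative d) (at S within {0..}) \<longrightarrow> d > 0"
    and H2b: "\<forall>S\<ge>0. \<forall>I\<ge>0. \<forall>d. ((\<lambda>t. f2 S t) has_real_derivative d) (at I within {0..}) \<longrightarrow> d \<le> 0"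
    using inc2[THEN conjunct1] inc2[THEN conjunct2, THEN conjunct2, THEN conjunct1]
      inc2[THEN conjunct2, THEN conjunct2, THEN conjunct2, THEN conjunct1]
      inc2[THEN conjunct2, THEN conjunct2, THEN conjunct2, THEN conjunct2, THEN conjunct1]
      inc2[THEN conjunct2, THEN conjunct2, THEN conjunct2, THEN conjunct2, THEN conjunct2, THEN conjunct1]
      inc2[THEN conjunct2, THEN conjunct2, THEN conjunct2, THEN conjunct2, THEN conjunct2, THEN conjunct2, THEN conjunct1]
    by - assumption+
  have F1S0: "\<forall>S\<ge>0. F1 S 0 = 0"
    using inc1[THEN conjunct2, THEN conjunct2, THEN conjunct2, THEN conjunct2, THEN conjunct1] .
  obtain g1 g2 where gd: "\<forall>S\<ge>0. \<forall>I\<ge>0. ((\<lambda>t. f2 t I) has_real_derivative g1 S I) (at S within {0..})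
      \<and> ((\<lambda>t. f2 S t) has_real_derivative g2 S I) (at I within {0..})"
    and contf: "continuous_on quad (\<lambda>(S,I). f2 S I)"
    using partials[OF C2f] by blast
  have G2: "f2 S1 I < f2 S2 I" if hy: "I \<ge> 0" "0 \<le> S1" "S1 < S2" for I S1 S2
  proof -
    have dd: "\<forall>x\<ge>0. ((\<lambda>t. f2 t I) has_real_derivative g1 x I) (at x within {0..})" using gd hy(1) by simp
    obtain z where z: "z > 0" "f2 S2 I - f2 S1 I = (S2 - S1) * g1 z I"
      using mvt_within[of 0 "\<lambda>t. f2 t I" "\<lambda>t. g1 t I" S1 S2, OF dd hy(2) hy(3)] by auto
    have "g1 z I > 0" by (rule H2a[rule_format, OF less_imp_le[OF z(1)] hy(1) gd[rule_format, OF less_imp_le[OF z(1)] hy(1), THEN conjunct1]])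
    then have "(S2 - S1) * g1 z I > 0" using hy by simp
    then show ?thesis using z by linarith
  qed
  have G3: "f2 S I2 \<le> f2 S I1" if hy: "S \<ge> 0" "0 \<le> I1" "I1 \<le> I2" for S I1 I2
  proof (cases "I1 = I2")
    case False
    then have lt: "I1 < I2" using hy by simp
    have dd: "\<forall>x\<ge>0. ((\<lambda>t. f2 S t) has_real_derivative g2 S x) (at x within {0..})" using gd hy(1) by simp
    obtain z where z: "z > 0" "f2 S I2 - f2 S I1 = (I2 - I1) * g2 S z"
      using mvt_within[of 0 "\<lambda>t. f2 S t" "\<lambda>t. g2 S t" I1 I2, OF dd hy(2) lt] by auto
    have "g2 S z \<le> 0" by (rule H2b[rule_format, OF hy(1) less_imp_le[OF z(1)] gd[rule_format, OF hy(1) less_imp_le[OF z(1)], THEN conjunct2]])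
    then have "(I2 - I1) * g2 S z \<le> 0" using lt by (simp add: mult_nonneg_nonpos)
    then show ?thesis using z by simp
  qed simp
  have G6: "f2 0 I = 0" if "I > 0" for I
  proof -
    have "F2 0 I = I * f2 0 I" using H1 that by simp
    moreover have "F2 0 I = 0" using F20 that by simp
    ultimately show ?thesis using that by simp
  qed
  have contc: "continuous_on T (\<lambda>x. (\<lambda>(S,I). f2 S I) (h x))"
    if "continuous_on T h" "h ` T \<subseteq> quad" for T and h :: "real \<Rightarrow> real \<times> real"
    using continuous_on_compose2[OF contf that(1) that(2)] .
  have G5: "f2 S0 0 = \<sigma>2"
  proof -
    have "((\<lambda>y. (F2 S0 y - F2 S0 0) / (y - 0)) \<longlongrightarrow> \<sigma>2) (at 0 within {0..})"
      using sigma2 unfolding has_field_derivative_iff S0_def lam_def .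
    then have "((\<lambda>y. F2 S0 y / y) \<longlongrightarrow> \<sigma>2) (at 0 within {0..})"
      using F2S0 S0pos by simp
    then have l1: "((\<lambda>y. F2 S0 y / y) \<longlongrightarrow> \<sigma>2) (at_right 0)"
      by (rule tendsto_within_subset) auto
    have "continuous_on {0..} (\<lambda>y. (\<lambda>(S,I). f2 S I) (S0, y))"
      by (rule contc) (auto simp: quad_def S0pos less_imp_le intro!: continuous_intros)
    then have "((\<lambda>y. f2 S0 y) \<longlongrightarrow> f2 S0 0) (at 0 within {0..})"
      unfolding continuous_on_def by auto
    then have lim: "((\<lambda>y. f2 S0 y) \<longlongrightarrow> f2 S0 0) (at_right 0)"
      by (rule tendsto_within_subset) auto
    have ev: "\<forall>\<^sub>F y in at_right 0. f2 S0 y = F2 S0 y / y"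
      using eventually_at_right_less[of "0::real"]
      by eventually_elim (use H1 S0pos in auto)
    have l2: "((\<lambda>y. F2 S0 y / y) \<longlongrightarrow> f2 S0 0) (at_right 0)"
      using lim tendsto_cong[OF ev, of "f2 S0 0"] by simp
    show ?thesis using tendsto_unique[OF trivial_limit_at_right_real l2 l1] .
  qed
  have den: "\<mu>*(lam+k*I) > 0" if "I \<ge> 0" for I
    using pos lampos that by (simp add: add_pos_nonneg)
  have den2: "\<mu>+k*I > 0" if "I \<ge> 0" for I
    using pos that by (simp add: add_pos_nonneg)
  have alg_i: "wf I * I = \<Lambda> - lam * sf I" if "I > 0" for I
    using den[of I] that unfolding wf_def sf_def lam_def
    by (simp add: field_simps; simp add: algebra_simps)
  have alg_ii: "wf I + k*r* sf I/(\<mu>+k*I) = \<alpha>" if "I \<ge> 0" for I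
  proof -
    have d1: "\<mu>*(lam+k*I) > 0" and d2: "\<mu>+k*I > 0" using den den2 that by auto
    have e: "k*r* sf I/(\<mu>+k*I) = k*r*(\<Lambda>-\<alpha>*I)/(\<mu>*(lam+k*I))"
    proof -
      have "sf I = (\<mu>+k*I) * ((\<Lambda>-\<alpha>*I)/(\<mu>*(lam+k*I)))" unfolding sf_def by simp
      then have "k*r* sf I/(\<mu>+k*I) = k*r*((\<Lambda>-\<alpha>*I)/(\<mu>*(lam+k*I)))" using d2 by simp
      then show ?thesis by simp
    qed
    have "wf I + k*r* sf I/(\<mu>+k*I) = (lam*\<mu>*\<alpha> - k*r*\<Lambda> + lam*k*\<alpha>*I + k*r*(\<Lambda>-\<alpha>*I))/(\<mu>*(lam+k*I))"
      unfolding e wf_def by (simp add: add_divide_distrib)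
    also have "lam*\<mu>*\<alpha> - k*r*\<Lambda> + lam*k*\<alpha>*I + k*r*(\<Lambda>-\<alpha>*I) = \<alpha>*(\<mu>*(lam+k*I))"
      unfolding lam_def by (simp add: algebra_simps)
    finally show ?thesis using d1 by (metis order_less_irrefl nonzero_mult_div_cancel_right)
  qed
  have alg_iii: "wf I1 < wf I2" if "0 \<le> I1" "I1 < I2" for I1 I2
  proof -
    have d1: "\<mu>*(lam+k*I1) > 0" and d2: "\<mu>*(lam+k*I2) > 0" using den that by auto
    have "(lam*\<mu>*\<alpha> - k*r*\<Lambda> + lam*k*\<alpha>*I1) * (\<mu>*(lam+k*I2)) < (lam*\<mu>*\<alpha> - k*r*\<Lambda> + lam*k*\<alpha>*I2) * (\<mu>*(lam+k*I1))"
    proof -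
      have "(lam*\<mu>*\<alpha> - k*r*\<Lambda> + lam*k*\<alpha>*I2) * (\<mu>*(lam+k*I1)) - (lam*\<mu>*\<alpha> - k*r*\<Lambda> + lam*k*\<alpha>*I1) * (\<mu>*(lam+k*I2))
          = (I2 - I1) * (\<mu> * k * (lam * r * \<alpha> + k*r*\<Lambda>))"
        unfolding lam_def by (simp add: algebra_simps)
      moreover have "(I2 - I1) * (\<mu> * k * (lam * r * \<alpha> + k*r*\<Lambda>)) > 0"
        using that pos lampos \<alpha>pos by (intro mult_pos_pos add_pos_pos) auto
      ultimately show ?thesis by linarith
    qed
    then show ?thesis unfolding wf_def using d1 d2 by (intro frac_lt)
  qed
  have s0: "sf 0 = S0" unfolding sf_def S0_def using pos lampos by simp
  have sL: "sf (\<Lambda>/\<alpha>) = 0" unfolding sf_def using \<alpha>pos by simp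
  have wfL: "wf (\<Lambda>/\<alpha>) = \<alpha>"
    using alg_i[of "\<Lambda>/\<alpha>"] sL pos \<alpha>pos by (simp add: field_simps)
  have s_nonneg: "sf I \<ge> 0" if "0 \<le> I" "I \<le> \<Lambda>/\<alpha>" for I
  proof -
    have "\<Lambda> - \<alpha>*I \<ge> 0" using that \<alpha>pos by (simp add: field_simps)
    then show ?thesis unfolding sf_def using den[of I] den2[of I] that by simp
  qed
  have s_pos: "sf I > 0" if "0 \<le> I" "I < \<Lambda>/\<alpha>" for I
  proof -
    have "\<Lambda> - \<alpha>*I > 0" using that \<alpha>pos by (simp add: field_simps)
    then show ?thesis unfolding sf_def using den[of I] den2[of I] that by simp
  qed
  have R2iff: "\<sigma>2 / \<alpha> + k * r * \<Lambda> / (\<alpha> * \<mu> * lam) > 1 \<longleftrightarrow> \<sigma>2 > wf 0"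
  proof -
    have "\<sigma>2 / \<alpha> + k * r * \<Lambda> / (\<alpha> * \<mu> * lam) = (\<sigma>2 * \<mu> * lam + k*r*\<Lambda>) / (\<alpha> * \<mu> * lam)"
      using \<alpha>pos pos lampos by (simp add: field_simps)
    also have "\<dots> > 1 \<longleftrightarrow> \<sigma>2 * \<mu> * lam + k*r*\<Lambda> > \<alpha> * \<mu> * lam"
      using \<alpha>pos pos lampos by (simp add: divide_simps)
    also have "\<dots> \<longleftrightarrow> \<sigma>2 > wf 0"
      unfolding wf_def using pos lampos by (simp add: divide_simps algebra_simps)
    finally show ?thesis .
  qed
  define Q where "Q = (\<lambda>S I. S*(\<mu>*(lam+k*I)) - (\<mu>+k*I)*(\<Lambda>-\<alpha>*I))"
  have Qs: "Q (sf I) I = 0" if "I \<ge> 0" for I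
  proof -
    have ne: "\<mu> \<noteq> 0" "lam+k*I \<noteq> 0" using den[of I] that by auto
    show ?thesis unfolding Q_def sf_def using ne by simp
  qed
  have mono_s: "sf I2 < sf I1" if "0 \<le> I1" "I1 < I2" "sf I2 < S0" for I1 I2
  proof (rule ccontr)
    assume "\<not> sf I2 < sf I1"
    then have le: "sf I1 \<le> sf I2" by simp
    define B where "B = \<alpha>*\<mu> - k*\<Lambda> + sf I2*\<mu>*k"
    have Qexp: "Q S I = k*\<alpha>*I^2 + (\<alpha>*\<mu> - k*\<Lambda> + S*\<mu>*k)*I + \<mu>*lam*S - \<mu>*\<Lambda>" for S I
      unfolding Q_def by (simp add: algebra_simps power2_eq_square)
    have "Q (sf I2) 0 < 0"
      using that(3) pos lampos unfolding Qexp S0_def by (simp add: field_simps)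
    moreover have "Q (sf I2) 0 - Q (sf I2) I2 = -I2*(k*\<alpha>*I2 + B)"
      unfolding Qexp B_def by (simp add: algebra_simps power2_eq_square)
    moreover have "Q (sf I2) I2 = 0" using Qs that by simp
    ultimately have "-I2*(k*\<alpha>*I2 + B) < 0" by simp
    then have "I2*(k*\<alpha>*I2 + B) > 0" by simp
    then have Bp: "k*\<alpha>*I2 + B > 0" using that by (simp add: zero_less_mult_iff)
    have "Q (sf I2) I1 - Q (sf I2) I2 = (I1 - I2)*(k*\<alpha>*(I1+I2) + B)"
      unfolding Qexp B_def by (simp add: algebra_simps power2_eq_square)
    moreover have "k*\<alpha>*(I1+I2) + B > 0"
    proof -
      have "k*\<alpha>*I1 \<ge> 0" using that pos \<alpha>pos by simp
      moreover have "k*\<alpha>*(I1+I2) = k*\<alpha>*I1 + k*\<alpha>*I2" by (simp add: algebra_simps)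
      ultimately show ?thesis using Bp by linarith
    qed
    ultimately have "Q (sf I2) I1 < 0" using \<open>Q (sf I2) I2 = 0\<close> that
      by (simp add: mult_neg_pos)
    moreover have "Q (sf I2) I1 - Q (sf I1) I1 = (sf I2 - sf I1) * (\<mu>*(lam+k*I1))"
      unfolding Q_def by (simp add: algebra_simps)
    moreover have "(sf I2 - sf I1) * (\<mu>*(lam+k*I1)) \<ge> 0"
      using le den[of I1] that by simp
    ultimately show False using Qs[of I1] that by simp
  qed
  define P where "P = (\<lambda>S V I. S > 0 \<and> V > 0 \<and> I > 0 \<and> equilibrium \<Lambda> \<mu> r k \<gamma>1 \<gamma>2 v1 v2 F1 F2 S V 0 I)"
  have fwd: "S = sf I \<and> V = r*S/(\<mu>+k*I) \<and> 0<I \<and> I<\<Lambda>/\<alpha> \<and> S < S0 \<and> f2 (sf I) I = wf I"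
    if "P S V I" for S V I
  proof -
    have S: "S > 0" and V: "V > 0" and I: "I > 0"
      and e1: "\<Lambda> - F1 S 0 - F2 S I - lam * S = 0"
      and e2: "r * S - (\<mu> + k * I) * V = 0"
      and e4: "F2 S I + k * I * V - \<alpha> * I = 0"
      using that unfolding P_def equilibrium_def \<alpha>_def lam_def by auto
    have FI: "F2 S I = I * f2 S I" using H1 S I by simp
    have e1': "I * f2 S I = \<Lambda> - lam*S" using e1 F1S0 S FI by simp
    have l: "\<Lambda> - lam*S + k*I*V - \<alpha>*I = 0" using e4 e1' FI by linarith
    have eq: "r*S = (\<mu>+k*I)*V" using e2 by simp
    have "(\<Lambda> - lam*S - \<alpha>*I)*(\<mu>+k*I) + k*I*(r*S) = (\<Lambda> - lam*S + k*I*V - \<alpha>*I)*(\<mu>+k*I)"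
      by (subst eq) (simp add: algebra_simps)
    then have "(\<Lambda> - lam*S - \<alpha>*I)*(\<mu>+k*I) + k*I*(r*S) = 0" using l by simp
    then have key: "S*(\<mu>*(lam+k*I)) = (\<mu>+k*I)*(\<Lambda>-\<alpha>*I)"
      unfolding lam_def by (simp add: algebra_simps)
    have Ss: "S = sf I" unfolding sf_def using key den[of I] I
      by (simp add: field_simps)
    have "S*(\<mu>*(lam+k*I)) > 0" using den[of I] S I by simp
    then have "(\<mu>+k*I)*(\<Lambda>-\<alpha>*I) > 0" using key by simp
    then have "\<Lambda>-\<alpha>*I > 0" using den2[of I] I by (simp add: zero_less_mult_iff)
    then have IL: "I < \<Lambda>/\<alpha>" using \<alpha>pos by (simp add: field_simps)
    have "f2 S I > 0" using G2[of I 0 S] G6[OF I] S I by simp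
    then have "I * f2 S I > 0" using I by simp
    then have "\<Lambda> - lam*S > 0" using e1' by simp
    then have SS0: "S < S0" unfolding S0_def using lampos by (simp add: field_simps)
    have "wf I * I = I * f2 S I" using alg_i[OF I] e1' Ss by simp
    then have "f2 (sf I) I = wf I" using I Ss by simp
    moreover have "V = r*S/(\<mu>+k*I)" using e2 den2[of I] I by (simp add: field_simps)
    ultimately show ?thesis using Ss I IL SS0 by simp
  qed
  have bwd: "P (sf I) (r* sf I/(\<mu>+k*I)) I" if I: "0 < I" "I < \<Lambda>/\<alpha>" "f2 (sf I) I = wf I" for I
  proof -
    have sp: "sf I > 0" using s_pos I by simp
    have Vp: "r* sf I/(\<mu>+k*I) > 0" using sp den2[of I] I pos by simp
    have FI: "F2 (sf I) I = I * wf I" using H1 sp I by simp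
    have e1: "\<Lambda> - F1 (sf I) 0 - F2 (sf I) I - lam * sf I = 0"
      using F1S0 sp FI alg_i[of I] I by (simp add: mult.commute)
    have e2: "r * sf I - (\<mu> + k * I) * (r* sf I/(\<mu>+k*I)) = 0"
      using den2[of I] I by simp
    have "I * wf I + k * I * (r* sf I/(\<mu>+k*I)) - \<alpha> * I = I * (wf I + k*r* sf I/(\<mu>+k*I) - \<alpha>)"
      by (simp add: algebra_simps)
    also have "\<dots> = 0" using alg_ii[of I] I by simp
    finally have e4: "F2 (sf I) I + k * I * (r* sf I/(\<mu>+k*I)) - \<alpha> * I = 0" using FI by simp
    show ?thesis unfolding P_def equilibrium_def
      using sp Vp I e1 e2 e4 F1S0 unfolding \<alpha>_def lam_def by simp
  qed
  have uniqI: False if "0 < I1" "I1 < I2" "sf I1 < S0" "sf I2 < S0" "I2 < \<Lambda>/\<alpha>"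
      "f2 (sf I1) I1 = wf I1" "f2 (sf I2) I2 = wf I2" for I1 I2
  proof -
    have "sf I2 < sf I1" using mono_s that by simp
    moreover have "sf I2 \<ge> 0" using s_nonneg that by simp
    ultimately have "f2 (sf I2) I1 < f2 (sf I1) I1" using G2[of I1 "sf I2" "sf I1"] that by linarith
    moreover have "f2 (sf I2) I2 \<le> f2 (sf I2) I1" using G3[of "sf I2" I1 I2] \<open>sf I2 \<ge> 0\<close> that by linarith
    moreover have "wf I1 < wf I2" using alg_iii[of I1 I2] that by linarith
    ultimately show False using that by simp
  qed
  have ex1_iff: "(\<exists>!p. case p of (S, V1, I2) \<Rightarrow> P S V1 I2) \<longleftrightarrow> \<sigma>2 > wf 0"
  proof
    assume "\<exists>!p. case p of (S, V1, I2) \<Rightarrow> P S V1 I2"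
    then obtain S V I where "P S V I" by auto
    then have f: "S = sf I \<and> V = r*S/(\<mu>+k*I) \<and> 0<I \<and> I<\<Lambda>/\<alpha> \<and> S < S0 \<and> f2 (sf I) I = wf I"
      by (rule fwd)
    have sI: "0 \<le> sf I" using f s_nonneg[of I] by auto
    have "f2 (sf I) 0 < f2 S0 0" using G2[of 0 "sf I" S0] f sI by linarith
    moreover have "f2 (sf I) I \<le> f2 (sf I) 0" using G3[of "sf I" 0 I] f sI by linarith
    moreover have "wf 0 < wf I" using alg_iii[of 0 I] f by linarith
    ultimately show "\<sigma>2 > wf 0" using G5 f by simp
  next
    assume hs: "\<sigma>2 > wf 0"
    define D where "D = (\<lambda>I. f2 (sf I) I - wf I)"
    have cont: "continuous_on {0..\<Lambda>/\<alpha>} D"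
    proof -
      have cs: "continuous_on {0..\<Lambda>/\<alpha>} sf"
        unfolding sf_def using den by (intro continuous_intros) (auto simp: less_imp_neq[symmetric] dest!: den)
      have "continuous_on {0..\<Lambda>/\<alpha>} (\<lambda>I. (\<lambda>(S,I). f2 S I) (sf I, I))"
        by (rule contc) (use s_nonneg in \<open>auto simp: quad_def intro!: continuous_intros cs\<close>)
      moreover have "continuous_on {0..\<Lambda>/\<alpha>} wf"
        unfolding wf_def by (intro continuous_intros) (auto dest!: den)
      ultimately show ?thesis unfolding D_def by (auto intro!: continuous_intros)
    qed
    have D0: "D 0 > 0" using hs G5 s0 unfolding D_def by simp
    have DL: "D (\<Lambda>/\<alpha>) < 0" using sL wfL G6[of "\<Lambda>/\<alpha>"] pos \<alpha>pos unfolding D_def by simp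
    obtain I0 where I0: "0 \<le> I0" "I0 \<le> \<Lambda>/\<alpha>" "D I0 = 0"
      using IVT2'[of D "\<Lambda>/\<alpha>" 0 0, OF less_imp_le[OF DL] less_imp_le[OF D0] _ cont] pos \<alpha>pos by auto
    have I0': "0 < I0" "I0 < \<Lambda>/\<alpha>" "f2 (sf I0) I0 = wf I0"
      using I0 D0 DL unfolding D_def by (auto simp: order_le_less)
    have P0: "P (sf I0) (r* sf I0/(\<mu>+k*I0)) I0" using bwd I0' by simp
    have f0: "sf I0 < S0" using fwd[OF P0] by simp
    show "\<exists>!p. case p of (S, V1, I2) \<Rightarrow> P S V1 I2"
    proof (rule ex1I[of _ "(sf I0, r* sf I0/(\<mu>+k*I0), I0)"])
      show "case (sf I0, r* sf I0/(\<mu>+k*I0), I0) of (S, V1, I2) \<Rightarrow> P S V1 I2" using P0 by simp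
    next
      fix p assume "case p of (S, V1, I2) \<Rightarrow> P S V1 I2"
      moreover obtain S V I where p: "p = (S, V, I)" by (cases p)
      ultimately have PI: "P S V I" by simp
      note f = fwd[OF PI]
      have "I = I0"
      proof (rule ccontr)
        assume "I \<noteq> I0"
        then consider "I < I0" | "I0 < I" by linarith
        then show False
        proof cases
          case 1 then show False using uniqI[of I I0] f I0' f0 by simp
        next
          case 2 then show False using uniqI[of I0 I] f I0' f0 by simp
        qed
      qed
      then show "p = (sf I0, r* sf I0/(\<mu>+k*I0), I0)" using p f by simp
    qed
  qed
  show ?thesis
    using ex1_iff R2iff unfolding P_def \<alpha>_def lam_def by simp
qed

end
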